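(* Let \(1 \le \ell < n\) be positive integers. Then \[ {}_2F_2\left(\begin{matrix} \frac{n-1}{n}\ell + 1, & 1 \\ \ell+2, & \frac{n-1}{n}\ell+3 \end{matrix}\,;\, \frac{\ell}{n}\right) = (\ell+1)!\,\frac{n^{\ell+1}}{\ell^{\ell+1}}\,\frac{\Gamma\!\left(\frac{n-1}{n}\ell+3\right)}{\Gamma\!\left(\frac{n-1}{n}\ell+1\right)}\left[\frac{n}{\ell}\left(\sum_{k=0}^{\ell}\frac{\ell^k}{k!\,n^k} - e^{\ell/n}\right) + \frac{\ell^{\ell-1}}{(\ell-1)!\,n^{\ell-1}}\cdot\frac{1}{(n+1)(\ell+1)-1-2\ell}\right]. \]
   Context: \({}_pF_q\) denotes the generalized hypergeometric series and \(\Gamma\) the Gamma function. This special value is used to evaluate, via Waadeland's tail theorem, the continued fraction whose partial numerators are \(-z(m+nz)\) and partial denominators \(m+(n+1)z+2\), at \(z=\ell/n\). *)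

theory Defs
  imports "HOL-Analysis.Analysis"
begin

definition hypergeometric :: "real list \<Rightarrow> real list \<Rightarrow> real \<Rightarrow> real" where
  "hypergeometric as bs z =
     (\<Sum>k. (\<Prod>a\<leftarrow>as. pochhammer a k) / (\<Prod>b\<leftarrow>bs. pochhammer b k) * z ^ k / fact k)"

end

theory Submission
  imports Defs
begin

lemma canc: "(Y::real) \<noteq> 0 \<Longrightarrow> X / Y * (Y * c) = X * c" by simp
lemma key_alg0:
  fixes z w d F1 :: real
  assumes "d > 0" "d + z > 0" "F1 > 0"
  shows "z * w / ((d + z) * F1 * d * (d + 1)) =
         w / (F1 * d) - z * w / ((d + z) * F1 * (d + 1)) - w / ((d + z) * F1)"
proof -
  have n: "d \<noteq> 0" "d + z \<noteq> 0" "F1 \<noteq> 0" "d + 1 \<noteq> 0" using assms by auto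
  define D where "D = (d + z) * F1 * d * (d + 1)"
  have D0: "D \<noteq> 0" using n unfolding D_def by simp
  have e1: "w / (F1 * d) * D = w * ((d + z) * (d + 1))" 
  proof - have "D = (F1 * d) * ((d + z) * (d + 1))" unfolding D_def by (simp add: mult_ac)
    moreover have "(F1 * d) \<noteq> 0" using n by simp
    ultimately show ?thesis by (simp only: canc not_False_eq_True) qed
  have e2: "z * w / ((d + z) * F1 * (d + 1)) * D = z * w * d"
  proof - have "D = ((d + z) * F1 * (d + 1)) * d" unfolding D_def by (simp add: mult_ac)
    moreover have "((d + z) * F1 * (d + 1)) \<noteq> 0" using n by simp
    ultimately show ?thesis by (simp only: canc not_False_eq_True) qed
  have e3: "w / ((d + z) * F1) * D = w * (d * (d + 1))"
  proof - have "D = ((d + z) * F1) * (d * (d + 1))" unfolding D_def by (simp add: mult_ac)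
    moreover have "((d + z) * F1) \<noteq> 0" using n by simp
    ultimately show ?thesis by (simp only: canc not_False_eq_True) qed
  have "(w / (F1 * d) - z * w / ((d + z) * F1 * (d + 1)) - w / ((d + z) * F1)) * D = z * w"
    unfolding left_diff_distrib e1 e2 e3 by (simp add: algebra_simps)
  then show ?thesis using D0 unfolding D_def[symmetric] by (metis nonzero_eq_divide_eq)
qed

lemma key_alg:
  fixes z M F1 w :: real
  assumes "M > z" "M > 0" "F1 > 0"
  shows "z * w / (M * F1 * (M - z) * (M + 1 - z)) =
         w / (F1 * (M - z)) - z * w / (M * F1 * (M + 1 - z)) - w / (M * F1)"
proof -
  define d where "d = M - z"
  have d: "d > 0" "M = d + z" using assms(1) unfolding d_def by auto
  have dz: "d + z > 0" using d assms(2) by simp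
  have e: "d + z - z = d" "d + z + 1 - z = d + 1" by simp_all
  show ?thesis unfolding d(2) e by (rule key_alg0[OF d(1) dz assms(3)])
qed

lemma reassoc:
  fixes A Q X f B G Y Z :: real
  assumes "Q \<noteq> 0" "X \<noteq> 0" "f \<noteq> 0" "B \<noteq> 0" "G \<noteq> 0" "Y \<noteq> 0"
  shows "A * Q / X * f / (B / G * Q) * (Z / Y) / f = A * G / Y * (Z / (B * X))"
  using assms by (simp add: field_simps)

lemma term_eq:
  fixes a z :: real and l k :: nat
  assumes z0: "0 < z" and z1: "z < 1" and ha: "a = real l + 1 - z"
  defines "u \<equiv> \<lambda>m::nat. z ^ (m - 1) / (fact (m - 1) * (real m - z))"
  shows "(\<Prod>x\<leftarrow>[a, 1]. pochhammer x k) / (\<Prod>x\<leftarrow>[real l + 2, a + 2]. pochhammer x k) * z ^ k / fact k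
       = a * (a + 1) * fact (l + 1) / z ^ (l + 1) *
         ((u (l + 1 + k) - u (l + 2 + k)) - z ^ (l + k) / fact (l + 1 + k))"
proof -
  define P where "P = pochhammer a k"
  define Q where "Q = pochhammer (a + 2) k"
  define M where "M = real (l + 1 + k)"
  define F1 where "F1 = (fact (l + k) :: real)"
  define w where "w = z ^ (l + k)"
  have apos: "a > 0" using ha z1 by simp
  have Qpos: "Q > 0" unfolding Q_def using apos by (intro pochhammer_pos) simp
  have p2: "pochhammer x 2 = x * (x + 1)" for x :: real
    by (simp add: numeral_2_eq_2 pochhammer_Suc)
  have "pochhammer a (k + 2) = P * pochhammer (a + k) 2"
    unfolding P_def by (rule pochhammer_product')
  moreover have "pochhammer a (2 + k) = pochhammer a 2 * Q"
    unfolding Q_def by (subst pochhammer_product') simp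
  ultimately have hP: "P * ((a + k) * (a + k + 1)) = a * (a + 1) * Q"
    by (simp only: p2 add.commute)
  have h1: "pochhammer (1::real) k = fact k" by (simp add: pochhammer_fact)
  have "pochhammer (1::real) ((l + 1) + k) = pochhammer 1 (l + 1) * pochhammer (1 + real (l + 1)) k"
    by (rule pochhammer_product')
  hence h2: "fact (l + 1 + k) = fact (l + 1) * pochhammer (real l + 2) k"
    by (simp add: pochhammer_fact[symmetric] add_ac)
  have hF: "fact (l + 1 + k) = M * F1" unfolding M_def F1_def
  proof -
    have "l + 1 + k = Suc (l + k)" by simp
    thus "fact (l + 1 + k) = real (l + 1 + k) * fact (l + k)" by (simp only: fact_Suc)
  qed
  have hu1: "u (l + 1 + k) = w / (F1 * (M - z))"
    unfolding u_def w_def F1_def M_def by simp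
  have hu2: "u (l + 2 + k) = z * w / (M * F1 * (M + 1 - z))"
    unfolding u_def w_def F1_def M_def
    by (simp add: hF[unfolded M_def F1_def, symmetric] add_ac)
  have Mz: "M > z" "M > 0" using z1 unfolding M_def by auto
  have F1pos: "F1 > 0" unfolding F1_def by simp
  have aM: "a + k = M - z" unfolding M_def ha by simp
  have hP': "P * ((M - z) * (M + 1 - z)) = a * (a + 1) * Q"
  proof -
    have e: "M - z + 1 = M + 1 - z" by simp
    show ?thesis using hP unfolding aM e .
  qed
  have Dn: "(M - z) * (M + 1 - z) \<noteq> 0" using Mz by simp
  have Pe: "P = a * (a + 1) * Q / ((M - z) * (M + 1 - z))"
    using hP' Dn by (metis nonzero_eq_divide_eq)
  have zpow: "z ^ k = z * w / z ^ (l + 1)" unfolding w_def using z0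
    by (simp add: power_add field_simps)
  have "(\<Prod>x\<leftarrow>[a, 1]. pochhammer x k) / (\<Prod>x\<leftarrow>[real l + 2, a + 2]. pochhammer x k) * z ^ k / fact k
       = P * fact k / (fact (l + 1 + k) / fact (l + 1) * Q) * z ^ k / fact k"
    using h1 h2 by (simp add: P_def Q_def)
  also have "\<dots> = a * (a + 1) * fact (l + 1) / z ^ (l + 1) *
       (z * w / (M * F1 * (M - z) * (M + 1 - z)))"
    unfolding Pe hF zpow using Qpos Mz F1pos z0 Dn
    by (subst reassoc) (simp_all add: mult_ac)
  also have "\<dots> = a * (a + 1) * fact (l + 1) / z ^ (l + 1) *
         ((u (l + 1 + k) - u (l + 2 + k)) - z ^ (l + k) / fact (l + 1 + k))"
    unfolding key_alg[OF Mz F1pos] hu1 hu2 hF w_def ..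
  finally show ?thesis .
qed

theorem lemma4p2:
  fixes l n :: nat
  assumes "1 \<le> l" and "l < n"
  shows "hypergeometric [(real n - 1) / real n * real l + 1, 1]
                        [real l + 2, (real n - 1) / real n * real l + 3] (real l / real n)
       = fact (l + 1) * real n ^ (l + 1) / real l ^ (l + 1)
         * (Gamma ((real n - 1) / real n * real l + 3) / Gamma ((real n - 1) / real n * real l + 1))
         * (real n / real l * ((\<Sum>k=0..l. real l ^ k / (fact k * real n ^ k)) - exp (real l / real n))
            + real l ^ (l - 1) / (fact (l - 1) * real n ^ (l - 1))
              * (1 / ((real n + 1) * (real l + 1) - 1 - 2 * real l)))"
proof -
  define z where "z = real l / real n"
  define a where "a = (real n - 1) / real n * real l + 1"
  define u where "u \<equiv> \<lambda>m::nat. z ^ (m - 1) / (fact (m - 1) * (real m - z))"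
  define S where "S = (\<Sum>k=0..l. real l ^ k / (fact k * real n ^ k))"
  define C where "C = a * (a + 1) * fact (l + 1) / z ^ (l + 1)"
  have n0: "real n > 0" using assms by simp
  have z0: "0 < z" using assms unfolding z_def by simp
  have z1: "z < 1" using assms unfolding z_def by simp
  have ha: "a = real l + 1 - z" unfolding a_def z_def using n0 by (simp add: field_simps)
  have apos: "a > 0" using ha z1 by simp
  have S_eq: "S = (\<Sum>k<l+1. z ^ k / fact k)"
    unfolding S_def z_def by (intro sum.cong) (auto simp: power_divide)
  have lim1: "(\<lambda>k. z ^ (k + l) / fact (k + l)) \<longlonglongrightarrow> 0"
  proof -
    have "summable (\<lambda>k. z ^ k / fact k)"
      using summable_exp[of z] by (simp add: divide_inverse mult.commute)
    hence "(\<lambda>k. z ^ k / fact k) \<longlonglongrightarrow> 0" by (rule summable_LIMSEQ_zero)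
    thus ?thesis by (rule LIMSEQ_ignore_initial_segment)
  qed
  have lim: "(\<lambda>k. u (l + 1 + k)) \<longlonglongrightarrow> 0"
  proof (rule Lim_null_comparison[OF _ lim1])
    show "\<forall>\<^sub>F k in sequentially. norm (u (l + 1 + k)) \<le> z ^ (k + l) / fact (k + l)"
    proof (intro always_eventually allI)
      fix k :: nat
      have d1: "real (l + 1 + k) - z \<ge> 1" using z1 assms(1) by simp
      have nn: "z ^ (k + l) / fact (k + l) \<ge> 0" using z0 by simp
      have "u (l + 1 + k) = z ^ (k + l) / fact (k + l) / (real (l + 1 + k) - z)"
        unfolding u_def by (simp add: add_ac)
      also have "\<dots> \<le> z ^ (k + l) / fact (k + l)"
        using divide_left_mono[OF d1 nn] d1 by simp
      finally have "u (l + 1 + k) \<le> z ^ (k + l) / fact (k + l)" .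
      moreover have "u (l + 1 + k) \<ge> 0" unfolding u_def using z0 z1 assms(1) by simp
      ultimately show "norm (u (l + 1 + k)) \<le> z ^ (k + l) / fact (k + l)" by simp
    qed
  qed
  have T1: "(\<lambda>k. u (l + 1 + k) - u (l + 2 + k)) sums u (l + 1)"
    using telescope_sums'[OF lim] by simp
  have T2: "(\<lambda>k. z ^ (l + k) / fact (l + 1 + k)) sums ((exp z - S) / z)"
  proof -
    have "(\<lambda>k. z ^ k / fact k) sums exp z"
      using exp_converges[of z] by (simp add: divide_inverse mult.commute)
    hence "(\<lambda>k. z ^ k / fact k) sums ((exp z - S) + (\<Sum>k<l+1. z ^ k / fact k))"
      unfolding S_eq by simp
    hence "(\<lambda>k. z ^ (k + (l + 1)) / fact (k + (l + 1))) sums (exp z - S)"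
      by (subst sums_iff_shift) 
    hence "(\<lambda>k. z ^ (k + (l + 1)) / fact (k + (l + 1)) / z) sums ((exp z - S) / z)"
      by (rule sums_divide)
    moreover have "(\<lambda>k. z ^ (k + (l + 1)) / fact (k + (l + 1)) / z) = (\<lambda>k. z ^ (l + k) / fact (l + 1 + k))"
    proof
      fix k
      have e: "k + (l + 1) = l + 1 + k" "z ^ (l + 1 + k) = z * z ^ (l + k)" by simp_all
      show "z ^ (k + (l + 1)) / fact (k + (l + 1)) / z = z ^ (l + k) / fact (l + 1 + k)"
        unfolding e using z0 by simp
    qed
    ultimately show ?thesis by simp
  qed
  have T: "(\<lambda>k. C * ((u (l + 1 + k) - u (l + 2 + k)) - z ^ (l + k) / fact (l + 1 + k)))
           sums (C * (u (l + 1) - (exp z - S) / z))"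
    by (intro sums_mult sums_diff T1 T2)
  have H: "hypergeometric [a, 1] [real l + 2, a + 2] z = C * (u (l + 1) - (exp z - S) / z)"
  proof -
    have eqf: "(\<lambda>k. (\<Prod>x\<leftarrow>[a, 1]. pochhammer x k) / (\<Prod>x\<leftarrow>[real l + 2, a + 2]. pochhammer x k) * z ^ k / fact k)
        = (\<lambda>k. C * ((u (l + 1 + k) - u (l + 2 + k)) - z ^ (l + k) / fact (l + 1 + k)))"
      unfolding C_def u_def by (intro ext term_eq[OF z0 z1 ha])
    show ?thesis unfolding hypergeometric_def eqf by (rule sums_unique[OF T, symmetric])
  qed
  have G: "Gamma (a + 2) / Gamma a = a * (a + 1)"
  proof -
    have ni: "x \<notin> \<int>\<^sub>\<le>\<^sub>0" if "x > 0" for x :: real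
      using that nonpos_Ints_nonpos by fastforce
    have "Gamma (a + 2) = (a + 1) * Gamma (a + 1)"
      using Gamma_plus1[OF ni[of "a + 1"]] apos by (simp add: add.assoc)
    also have "\<dots> = (a + 1) * (a * Gamma a)" using Gamma_plus1[OF ni[OF apos]] by simp
    finally show ?thesis using Gamma_real_pos[OF apos] by simp
  qed
  have P1: "fact (l + 1) * real n ^ (l + 1) / real l ^ (l + 1) = fact (l + 1) / z ^ (l + 1)"
    unfolding z_def using n0 assms by (simp add: power_divide)
  have P2: "real n / real l * (S - exp z) = - ((exp z - S) / z)"
    unfolding z_def using n0 assms by (simp add: field_simps)
  have P3: "real l ^ (l - 1) / (fact (l - 1) * real n ^ (l - 1))
              * (1 / ((real n + 1) * (real l + 1) - 1 - 2 * real l)) = u (l + 1)"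
  proof -
    obtain j where j: "l = Suc j" using assms by (cases l) auto
    have zj: "real l ^ (l - 1) / (fact (l - 1) * real n ^ (l - 1)) = z ^ j / fact j"
      unfolding z_def j by (simp add: power_divide)
    have den: "(real n + 1) * (real l + 1) - 1 - 2 * real l = real n * (real j + 2 - z)"
      unfolding z_def j using n0 by (simp add: field_simps)
    have zn: "z / real (Suc j) = 1 / real n" unfolding z_def j using n0 by simp
    have "u (l + 1) = z ^ j / fact j * (z / real (Suc j)) * (1 / (real j + 2 - z))"
      unfolding u_def j by (simp add: field_simps)
    also have "\<dots> = z ^ j / fact j * (1 / (real n * (real j + 2 - z)))" unfolding zn by simp
    finally show ?thesis unfolding zj den by simp
  qed
  have "hypergeometric [(real n - 1) / real n * real l + 1, 1]
                        [real l + 2, (real n - 1) / real n * real l + 3] (real l / real n)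
       = hypergeometric [a, 1] [real l + 2, a + 2] z"
    unfolding a_def z_def by (simp add: add.assoc)
  also have "\<dots> = C * (u (l + 1) - (exp z - S) / z)" by (rule H)
  also have "\<dots> = fact (l + 1) / z ^ (l + 1) * (a * (a + 1)) * (- ((exp z - S) / z) + u (l + 1))"
    unfolding C_def by (simp add: algebra_simps)
  also have "\<dots> = fact (l + 1) * real n ^ (l + 1) / real l ^ (l + 1)
         * (Gamma ((real n - 1) / real n * real l + 3) / Gamma ((real n - 1) / real n * real l + 1))
         * (real n / real l * ((\<Sum>k=0..l. real l ^ k / (fact k * real n ^ k)) - exp (real l / real n))
            + real l ^ (l - 1) / (fact (l - 1) * real n ^ (l - 1))
              * (1 / ((real n + 1) * (real l + 1) - 1 - 2 * real l)))"
  proof -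
    have g: "(real n - 1) / real n * real l + 3 = a + 2" unfolding a_def by simp
    show ?thesis unfolding P1 P3 g a_def[symmetric] G S_def[symmetric] z_def[symmetric] P2 ..
  qed
  finally show ?thesis .
qed

end
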